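(* Let $K,T\subset\mathbb{R}^n$ be convex bodies and let $q=(q_1,\dots,q_m)$ be a closed $(K,T)$-Minkowski billiard trajectory with respect to the $K$-supporting hyperplanes $H_1,\dots,H_m$. Let $U$ be the inclusion-minimal linear subspace of $\mathbb{R}^n$ containing the outer unit normal vectors $n_K(q_1),\dots,n_K(q_m)$ normal to $H_1,\dots,H_m$, let $W=U^\perp$, and let $H_j^+$ be the closed half-space bounded by $H_j$ containing $K$. Then $H_j=(H_j\cap U)\oplus W$ and $H_j^+=(H_j^+\cap U)\oplus W$ for all $j$, the set $\bigcap_{j=1}^m(H_j^+\cap U)$ is nearly bounded in $U$, and $\bigcap_{j=1}^m H_j^+$ is nearly bounded in $\mathbb{R}^n$. If moreover $T$ is smooth, then $U$ coincides with the convex cone spanned by $n_K(q_1),\dots,n_K(q_m)$ and $\bigcap_{j=1}^m(H_j^+\cap U)$ is bounded in $U$ (and $\bigcap_{j=1}^mH_j^+$ is nearly bounded in $\mathbb{R}^n$).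
   Context: A convex body is a compact convex set in $\mathbb{R}^n$ containing the origin in its interior; it is smooth if through each boundary point there is a unique supporting hyperplane. For a convex set $C$ and $z\in\partial C$, $N_C(z)=\{v:\langle v,y-z\rangle\le 0\ \forall y\in C\}$. A subset $A$ of a linear space $U$ is nearly bounded in $U$ if it lies between two parallel affine hyperplanes of $U$. A closed polygonal curve $(q_1,\dots,q_m)$, $m\ge2$, always satisfies $q_j\ne q_{j+1}$ and $q_j\notin[q_{j-1},q_{j+1}]$ (indices mod $m$). A closed polygonal curve $q$ with vertices on $\partial K$ is a closed $(K,T)$-Minkowski billiard trajectory with respect to the $K$-supporting hyperplanes $H_1,\dots,H_m$ through $q_1,\dots,q_m$ if there are $p_1,\dots,p_m\in\partial T$, outer unit normals $n_K(q_j)\in N_K(q_j)$ normal to $H_j$, and $\mu_j\ge 0$ with $q_{j+1}-q_j\in N_T(p_j)$ and $p_{j+1}-p_j=-\mu_{j+1}n_K(q_{j+1})$ for all $j$. *)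

theory Defs
  imports "HOL-Analysis.Analysis"
begin

definition convex_body :: "'a::euclidean_space set \<Rightarrow> bool" where
  "convex_body C \<longleftrightarrow> compact C \<and> convex C \<and> 0 \<in> interior C"

definition normal_cone :: "'a::euclidean_space set \<Rightarrow> 'a \<Rightarrow> 'a set" where
  "normal_cone C z = {v. \<forall>y\<in>C. v \<bullet> (y - z) \<le> 0}"

definition supporting_hyperplane :: "'a::euclidean_space set \<Rightarrow> 'a \<Rightarrow> 'a set \<Rightarrow> bool" where
  "supporting_hyperplane C z H \<longleftrightarrow>
     z \<in> C \<and> (\<exists>v. v \<noteq> 0 \<and> H = {x. v \<bullet> x = v \<bullet> z} \<and> (\<forall>y\<in>C. v \<bullet> y \<le> v \<bullet> z))"

definition smooth_body :: "'a::euclidean_space set \<Rightarrow> bool" where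
  "smooth_body C \<longleftrightarrow> (\<forall>z\<in>frontier C. \<exists>!H. supporting_hyperplane C z H)"

text \<open>A is nearly bounded in the linear space U: it lies between two parallel
  affine hyperplanes of U (hyperplanes of U are described by a nonzero v in U).\<close>
definition nearly_bounded_in :: "'a::euclidean_space set \<Rightarrow> 'a set \<Rightarrow> bool" where
  "nearly_bounded_in U A \<longleftrightarrow>
     A \<subseteq> U \<and> (\<exists>v\<in>U. v \<noteq> 0 \<and> (\<exists>c1 c2. \<forall>x\<in>A. c1 \<le> v \<bullet> x \<and> v \<bullet> x \<le> c2))"

definition closed_polygonal :: "nat \<Rightarrow> (nat \<Rightarrow> 'a::euclidean_space) \<Rightarrow> bool" where
  "closed_polygonal m q \<longleftrightarrow> 2 \<le> m \<and>
     (\<forall>j<m. q j \<noteq> q (Suc j mod m) \<and>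
            q j \<notin> closed_segment (q ((j + m - 1) mod m)) (q (Suc j mod m)))"

text \<open>Closed (K,T)-Minkowski billiard trajectory q with respect to the K-supporting
  hyperplanes H j through q j, with witnesses: points p j, outer unit normals nK j, mu j.\<close>
definition minkowski_billiard_traj ::
  "'a::euclidean_space set \<Rightarrow> 'a set \<Rightarrow> nat \<Rightarrow> (nat \<Rightarrow> 'a) \<Rightarrow> (nat \<Rightarrow> 'a set)
   \<Rightarrow> (nat \<Rightarrow> 'a) \<Rightarrow> (nat \<Rightarrow> 'a) \<Rightarrow> (nat \<Rightarrow> real) \<Rightarrow> bool" where
  "minkowski_billiard_traj K T m q H nK p mu \<longleftrightarrow>
     closed_polygonal m q \<and>
     (\<forall>j<m. q j \<in> frontier K \<and> supporting_hyperplane K (q j) (H j) \<and>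
            p j \<in> frontier T \<and>
            norm (nK j) = 1 \<and> nK j \<in> normal_cone K (q j) \<and>
            H j = {x. nK j \<bullet> x = nK j \<bullet> q j} \<and>
            0 \<le> mu j \<and>
            q (Suc j mod m) - q j \<in> normal_cone T (p j) \<and>
            p (Suc j mod m) - p j = - (mu (Suc j mod m) *\<^sub>R nK (Suc j mod m)))"

end

theory Submission imports Defs begin

lemma ex1_uniq: "\<exists>!x. P x \<Longrightarrow> P a \<Longrightarrow> P b \<Longrightarrow> b = a"
  by blast


lemma telescope_mod:
  fixes f :: "nat \<Rightarrow> 'b::ab_group_add"
  assumes "0 < m"
  shows "(\<Sum>j<m. f (Suc j mod m)) = (\<Sum>j<m. f j)"
proof -
  have bij: "bij_betw (\<lambda>j. Suc j mod m) {..<m} {..<m}"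
  proof (rule bij_betw_imageI)
    show "inj_on (\<lambda>j. Suc j mod m) {..<m}"
    proof (rule inj_onI)
      fix x y assume x: "x \<in> {..<m}" and y: "y \<in> {..<m}" and e: "Suc x mod m = Suc y mod m"
      show "x = y"
      proof (cases "Suc x = m \<or> Suc y = m")
        case True then show ?thesis using x y e
          by (metis Suc_lessI lessThan_iff mod_less mod_self nat.distinct(1) nat.inject)
      next
        case False then have "Suc x < m" "Suc y < m" using x y by auto
        then show ?thesis using e by simp
      qed
    qed
    then show "(\<lambda>j. Suc j mod m) ` {..<m} = {..<m}"
      using assms by (intro endo_inj_surj) auto
  qed
  show ?thesis using sum.reindex_bij_betw[OF bij, of f] by simp
qed

lemma zero_inner_all:
  fixes v p :: "'a::euclidean_space"
  assumes "0 \<in> interior T" "\<And>y. y \<in> T \<Longrightarrow> v \<bullet> (y - p) = 0"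
  shows "v = 0"
proof (rule ccontr)
  assume v: "v \<noteq> 0"
  obtain e where e: "e > 0" "ball 0 e \<subseteq> T" using assms(1) mem_interior by blast
  have "0 \<in> T" using e by auto
  then have vp: "v \<bullet> p = 0" using assms(2)[of 0] by simp
  define y where "y = (e/2 / norm v) *\<^sub>R v"
  have "norm y = e/2" using v e by (simp add: y_def)
  then have "y \<in> T" using e by auto
  then have "v \<bullet> y = 0" using assms(2)[of y] vp by (simp add: inner_diff_right)
  moreover have "v \<bullet> y = e/2 * norm v" using v by (simp add: y_def power2_norm_eq_inner[symmetric] power2_eq_square)
  ultimately show False using v e by simp
qed

lemma convex_cone_sum_mem:
  assumes "convex_cone S" "finite I" "\<And>i. i \<in> I \<Longrightarrow> f i \<in> S"
  shows "sum f I \<in> S"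
  using assms(2,3)
proof (induction I rule: finite_induct)
  case empty then show ?case using assms(1) by (simp add: convex_cone_contains_0)
next
  case (insert x F) then show ?case using assms(1) by (simp add: convex_cone_add)
qed


lemma lower_bound:
  fixes n :: "nat \<Rightarrow> 'a::euclidean_space"
  assumes "finite I" "k \<in> I" "(\<Sum>j\<in>I. mu j *\<^sub>R n j) = 0" "\<And>j. j\<in>I \<Longrightarrow> mu j \<ge> 0" "mu k > 0"
    "\<And>j. j\<in>I \<Longrightarrow> n j \<bullet> x \<le> c j"
  shows "n k \<bullet> x \<ge> -(\<Sum>j\<in>I-{k}. mu j * c j) / mu k"
proof -
  have "0 = (\<Sum>j\<in>I. mu j *\<^sub>R n j) \<bullet> x" using assms(3) by simp
  also have "\<dots> = (\<Sum>j\<in>I. mu j * (n j \<bullet> x))" by (simp add: inner_sum_left)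
  also have "\<dots> = mu k * (n k \<bullet> x) + (\<Sum>j\<in>I-{k}. mu j * (n j \<bullet> x))"
    using assms(1,2) by (simp add: sum.remove)
  also have "\<dots> \<le> mu k * (n k \<bullet> x) + (\<Sum>j\<in>I-{k}. mu j * c j)"
    using assms(4,6) by (intro add_left_mono sum_mono mult_left_mono) auto
  finally have "-(\<Sum>j\<in>I-{k}. mu j * c j) \<le> mu k * (n k \<bullet> x)" by simp
  then have "-(\<Sum>j\<in>I-{k}. mu j * c j) / mu k \<le> (mu k * (n k \<bullet> x)) / mu k"
    using assms(5) by (intro divide_right_mono) auto
  then show ?thesis using assms(5) by simp
qed

lemma normal_parallel:
  fixes T :: "'a::euclidean_space set"
  assumes sm: "smooth_body T" and cb: "convex_body T" and p: "p \<in> frontier T"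
    and u: "u \<in> normal_cone T p" "u \<noteq> 0" and v: "v \<in> normal_cone T p" "v \<noteq> 0"
  shows "\<exists>c>0. v = c *\<^sub>R u"
proof -
  have "closed T" using cb by (simp add: convex_body_def compact_imp_closed)
  then have pT: "p \<in> T" using p by (simp add: frontier_def)
  have su: "supporting_hyperplane T p {x. u \<bullet> x = u \<bullet> p}"
    using u pT unfolding supporting_hyperplane_def normal_cone_def by (auto simp: inner_diff_right)
  have sv: "supporting_hyperplane T p {x. v \<bullet> x = v \<bullet> p}"
    using v pT unfolding supporting_hyperplane_def normal_cone_def by (auto simp: inner_diff_right)
  have eq: "{x. v \<bullet> x = v \<bullet> p} = {x. u \<bullet> x = u \<bullet> p}"
  proof -
    have ex: "\<exists>!H. supporting_hyperplane T p H" using sm p unfolding smooth_body_def by (rule bspec)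
    show ?thesis using ex1_uniq[OF ex su sv] by simp
  qed
  define c where "c = (v \<bullet> u) / (u \<bullet> u)"
  define w where "w = v - c *\<^sub>R u"
  have uu: "u \<bullet> u > 0" using u by simp
  have wu: "u \<bullet> w = 0" using uu by (simp add: w_def c_def inner_diff_right inner_commute)
  have "p + w \<in> {x. u \<bullet> x = u \<bullet> p}" using wu by (simp add: inner_add_right)
  then have "p + w \<in> {x. v \<bullet> x = v \<bullet> p}" unfolding eq .
  then have "v \<bullet> (p + w) = v \<bullet> p" by simp
  then have "v \<bullet> w = 0" by (simp add: inner_add_right)
  moreover have "v \<bullet> w = w \<bullet> w" using wu by (simp add: w_def inner_diff_left inner_commute)
  ultimately have "w = 0" by simp
  then have vc: "v = c *\<^sub>R u" by (simp add: w_def)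
  have "c \<noteq> 0" using vc v by auto
  moreover have nneg: "\<not> c < 0"
  proof
    assume c: "c < 0"
    have "\<And>y. y \<in> T \<Longrightarrow> u \<bullet> (y - p) = 0"
    proof -
      fix y assume y: "y \<in> T"
      have "u \<bullet> (y - p) \<le> 0" using u y by (auto simp: normal_cone_def)
      moreover have "v \<bullet> (y - p) \<le> 0" using v y by (auto simp: normal_cone_def)
      then have "c * (u \<bullet> (y - p)) \<le> 0" by (simp add: vc)
      then have "u \<bullet> (y - p) \<ge> 0" using c by (simp add: mult_le_0_iff)
      ultimately show "u \<bullet> (y - p) = 0" by simp
    qed
    moreover have "0 \<in> interior T" using cb by (simp add: convex_body_def)
    ultimately have "u = 0"
    proof -
      assume h: "\<And>y. y \<in> T \<Longrightarrow> u \<bullet> (y - p) = 0" and i: "0 \<in> interior T"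
      obtain e where e: "e > 0" "ball 0 e \<subseteq> T" using i mem_interior by blast
      have "0 \<in> T" using e by auto
      then have up: "u \<bullet> p = 0" using h[of 0] by simp
      define y where "y = (e/2 / norm u) *\<^sub>R u"
      have "norm y = e/2" using u e by (simp add: y_def)
      then have "y \<in> T" using e by auto
      then have "u \<bullet> y = 0" using h[of y] up by (simp add: inner_diff_right)
      moreover have "u \<bullet> y = e/2 * norm u" using u by (simp add: y_def power2_norm_eq_inner[symmetric] power2_eq_square)
      ultimately show "u = 0" using e by simp
    qed
    then show False using u by simp
  qed
  ultimately have "c > 0" by simp
  then show ?thesis using vc by blast
qed

lemma bounded_span_inner:
  fixes n :: "nat \<Rightarrow> 'a::euclidean_space"
  assumes "finite I" "S \<subseteq> span (n ` I)" "\<And>x j. x \<in> S \<Longrightarrow> j \<in> I \<Longrightarrow> \<bar>n j \<bullet> x\<bar> \<le> M"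
  shows "bounded S"
proof -
  define U where "U = span (n ` I)"
  define F where "F = (\<lambda>x. \<Sum>j\<in>I. \<bar>n j \<bullet> x\<bar>)"
  have Fpos: "F x > 0" if "x \<in> U" "x \<noteq> 0" for x
  proof (rule ccontr)
    assume "\<not> F x > 0"
    then have "F x \<le> 0" by simp
    moreover have "F x \<ge> 0" unfolding F_def by (intro sum_nonneg) simp
    ultimately have "F x = 0" by simp
    then have "\<forall>j\<in>I. \<bar>n j \<bullet> x\<bar> = 0" unfolding F_def
      using sum_nonneg_eq_0_iff[OF assms(1), of "\<lambda>j. \<bar>n j \<bullet> x\<bar>"] by simp
    then have oy: "orthogonal x y" if "y \<in> n ` I" for y using that by (auto simp: orthogonal_def inner_commute)
    have xs: "x \<in> span (n ` I)" using \<open>x \<in> U\<close> U_def by simp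
    have "orthogonal x x" by (rule orthogonal_to_span[OF xs oy])
    then show False using \<open>x \<noteq> 0\<close> by (simp add: orthogonal_def)
  qed
  have Fhom: "F (c *\<^sub>R x) = \<bar>c\<bar> * F x" for c x
    by (simp add: F_def sum_distrib_left abs_mult)
  show ?thesis
  proof (cases "sphere 0 1 \<inter> U = {}")
    case True
    have "S \<subseteq> {0}"
    proof
      fix x assume x: "x \<in> S"
      show "x \<in> {0}"
      proof (rule ccontr)
        assume "x \<notin> {0}"
        then have "(1/norm x) *\<^sub>R x \<in> sphere 0 1 \<inter> U"
          using x assms(2) U_def by (auto simp: span_mul)
        then show False using True by blast
      qed
    qed
    then show ?thesis by (rule bounded_subset[rotated]) simp
  next
    case False
    have cpt: "compact (sphere 0 1 \<inter> U)"
      by (simp add: U_def closed_span compact_Int_closed)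
    have cont: "continuous_on (sphere 0 1 \<inter> U) F"
      unfolding F_def by (intro continuous_intros)
    obtain x0 where x0: "x0 \<in> sphere 0 1 \<inter> U" "\<And>y. y \<in> sphere 0 1 \<inter> U \<Longrightarrow> F x0 \<le> F y"
      using continuous_attains_inf[OF cpt False cont] by blast
    have "x0 \<noteq> 0" using x0(1) by auto
    then have d: "F x0 > 0" using x0(1) Fpos by blast
    have "norm x \<le> (card I * M) / F x0" if x: "x \<in> S" for x
    proof (cases "x = 0")
      case True
      have "0 \<le> real (card I) * M"
      proof (cases "I = {}")
        case False
        then obtain j where "j \<in> I" by blast
        then have "0 \<le> M" using assms(3)[OF x] True by force
        then show ?thesis by simp
      qed simp
      then show ?thesis using True d by simp
    next
      case False
      have "(1/norm x) *\<^sub>R x \<in> sphere 0 1 \<inter> U"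
        using x False assms(2) U_def by (auto simp: span_mul)
      then have "F x0 \<le> F ((1/norm x) *\<^sub>R x)" using x0 by blast
      also have "\<dots> = F x / norm x" using Fhom by simp
      finally have "F x0 * norm x \<le> F x" using False by (simp add: le_divide_eq)
      also have "F x \<le> card I * M" unfolding F_def
        using sum_bounded_above[of I "\<lambda>j. \<bar>n j \<bullet> x\<bar>" M] assms(3) x by auto
      finally show ?thesis using d by (simp add: le_divide_eq mult.commute)
    qed
    then show ?thesis unfolding bounded_iff by blast
  qed
qed

theorem proposition3p8:
  fixes K T :: "'a::euclidean_space set"
    and m :: nat and q p nK :: "nat \<Rightarrow> 'a" and H :: "nat \<Rightarrow> 'a set" and mu :: "nat \<Rightarrow> real"
  assumes "convex_body K" and "convex_body T"
    and "minkowski_billiard_traj K T m q H nK p mu"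
  defines "U \<equiv> span (nK ` {..<m})"
    and "Hp \<equiv> (\<lambda>j. {x. nK j \<bullet> x \<le> nK j \<bullet> q j})"
  shows "(\<forall>j<m. H j = {a + w |a w. a \<in> H j \<inter> U \<and> w \<in> orthogonal_comp U}
              \<and> Hp j = {a + w |a w. a \<in> Hp j \<inter> U \<and> w \<in> orthogonal_comp U})
         \<and> nearly_bounded_in U (\<Inter>j<m. Hp j \<inter> U)
         \<and> nearly_bounded_in UNIV (\<Inter>j<m. Hp j)
         \<and> (smooth_body T \<longrightarrow>
              U = convex_cone hull (nK ` {..<m})
              \<and> bounded (\<Inter>j<m. Hp j \<inter> U)
              \<and> nearly_bounded_in UNIV (\<Inter>j<m. Hp j))"
proof -
  note tr = assms(3)[unfolded minkowski_billiard_traj_def]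
  have cp: "closed_polygonal m q" using tr by blast
  have m2: "2 \<le> m" using cp closed_polygonal_def by blast
  have nK1: "\<And>j. j<m \<Longrightarrow> norm (nK j) = 1" using tr by blast
  have Hj: "\<And>j. j<m \<Longrightarrow> H j = {x. nK j \<bullet> x = nK j \<bullet> q j}" using tr by blast
  have mu0: "\<And>j. j<m \<Longrightarrow> 0 \<le> mu j" using tr by blast
  have qN: "\<And>j. j<m \<Longrightarrow> q (Suc j mod m) - q j \<in> normal_cone T (p j)" using tr by blast
  have pst: "\<And>j. j<m \<Longrightarrow> p (Suc j mod m) - p j = - (mu (Suc j mod m) *\<^sub>R nK (Suc j mod m))"
    using tr by blast
  have pfr: "\<And>j. j<m \<Longrightarrow> p j \<in> frontier T" using tr by blast
  have qne: "\<And>j. j<m \<Longrightarrow> q j \<noteq> q (Suc j mod m)" using cp closed_polygonal_def by blast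
  have qseg: "\<And>j. j<m \<Longrightarrow> q j \<notin> closed_segment (q ((j + m - 1) mod m)) (q (Suc j mod m))"
    using cp closed_polygonal_def by blast
  have m0: "0 < m" using m2 by simp
  have sumz: "(\<Sum>j<m. mu j *\<^sub>R nK j) = 0"
  proof -
    have "(\<Sum>j<m. p (Suc j mod m) - p j) = 0" using telescope_mod[OF m0, of p] by (simp add: sum_subtractf)
    then have "(\<Sum>j<m. -(mu (Suc j mod m) *\<^sub>R nK (Suc j mod m))) = 0"
      using pst by (metis (no_types, lifting) lessThan_iff sum.cong)
    then have "(\<Sum>j<m. mu (Suc j mod m) *\<^sub>R nK (Suc j mod m)) = 0" by (simp add: sum_negf)
    then show ?thesis using telescope_mod[OF m0, of "\<lambda>j. mu j *\<^sub>R nK j"] by simp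
  qed
  have "\<exists>k<m. mu k > 0"
  proof (rule ccontr)
    assume "\<not> ?thesis"
    then have mz: "\<And>j. j<m \<Longrightarrow> mu j = 0" using mu0 by force
    have pc: "p j = p 0" if "j < m" for j
      using that
    proof (induction j)
      case (Suc j)
      then have "Suc j mod m = Suc j" by simp
      then have "p (Suc j) = p j" using pst[of j] mz[of "Suc j"] Suc.prems by simp
      with Suc show ?case by simp
    qed simp
    define d where "d j = q (Suc j mod m) - q j" for j
    have dN: "\<And>j. j<m \<Longrightarrow> d j \<in> normal_cone T (p 0)" using qN pc d_def by metis
    have dsum: "(\<Sum>j<m. d j) = 0" using telescope_mod[OF m0, of q] by (simp add: d_def sum_subtractf)
    have "d 0 = 0"
    proof (rule zero_inner_all[of T _ "p 0"])
      show "0 \<in> interior T" using assms(2) convex_body_def by blast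
      fix y assume y: "y \<in> T"
      have le: "\<And>j. j \<in> {..<m} \<Longrightarrow> d j \<bullet> (y - p 0) \<le> 0" using dN y by (auto simp: normal_cone_def)
      have "(\<Sum>j<m. d j \<bullet> (y - p 0)) = 0" using dsum by (simp add: inner_sum_left[symmetric])
      then have "\<forall>j\<in>{..<m}. d j \<bullet> (y - p 0) = 0"
        using sum_nonneg_eq_0_iff[of "{..<m}" "\<lambda>j. - (d j \<bullet> (y - p 0))"] le by (simp add: sum_negf)
      then show "d 0 \<bullet> (y - p 0) = 0" using m0 by simp
    qed
    then show False using qne[of 0] m0 d_def by simp
  qed
  then obtain k where k: "k<m" "mu k > 0" by blast
  define c where "c j = nK j \<bullet> q j" for j
  define L where "L k = -(\<Sum>j\<in>{..<m}-{k}. mu j * c j)/mu k" for k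
  have lb: "\<And>x k. k<m \<Longrightarrow> mu k > 0 \<Longrightarrow> x \<in> (\<Inter>j<m. Hp j) \<Longrightarrow> nK k \<bullet> x \<ge> L k"
    unfolding L_def using lower_bound[of "{..<m}" _ mu nK _ c] sumz mu0 by (auto simp: Hp_def c_def)
  have nKU: "\<And>j. j<m \<Longrightarrow> nK j \<in> U" by (simp add: U_def span_base)
  have nKnz: "\<And>j. j<m \<Longrightarrow> nK j \<noteq> 0" using nK1 by force
  have part1: "\<forall>j<m. H j = {a + w |a w. a \<in> H j \<inter> U \<and> w \<in> orthogonal_comp U}
              \<and> Hp j = {a + w |a w. a \<in> Hp j \<inter> U \<and> w \<in> orthogonal_comp U}"
  proof (intro allI impI)
    fix j assume j: "j<m"
    have key: "\<exists>a w. x = a + w \<and> a \<in> U \<and> w \<in> orthogonal_comp U \<and> nK j \<bullet> a = nK j \<bullet> x" for x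
    proof -
      obtain y z where yz: "y \<in> span (nK`{..<m})" "\<And>w. w \<in> span (nK ` {..<m}) \<Longrightarrow> orthogonal z w" "x = y+z"
        using orthogonal_subspace_decomp_exists[of "nK`{..<m}" x] by blast
      have zU: "z \<in> orthogonal_comp U" using yz(2) by (auto simp: orthogonal_comp_def U_def orthogonal_commute)
      have "nK j \<bullet> z = 0" using yz(2)[of "nK j"] nKU[OF j] by (simp add: U_def orthogonal_def inner_commute)
      then show ?thesis using yz zU by (auto simp: U_def inner_add_right)
    qed
    have orthz: "nK j \<bullet> (a + w) = nK j \<bullet> a" if "w \<in> orthogonal_comp U" for a w
      using that nKU[OF j] by (auto simp: orthogonal_comp_def orthogonal_def inner_add_right)
    have gen: "{x. P (nK j \<bullet> x)} = {a + w |a w. a \<in> {x. P (nK j \<bullet> x)} \<inter> U \<and> w \<in> orthogonal_comp U}" for P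
    proof (intro set_eqI iffI)
      fix x assume "x \<in> {x. P (nK j \<bullet> x)}"
      then show "x \<in> {a + w |a w. a \<in> {x. P (nK j \<bullet> x)} \<inter> U \<and> w \<in> orthogonal_comp U}"
        using key[of x] by force
    next
      fix x assume "x \<in> {a + w |a w. a \<in> {x. P (nK j \<bullet> x)} \<inter> U \<and> w \<in> orthogonal_comp U}"
      then show "x \<in> {x. P (nK j \<bullet> x)}" using orthz by force
    qed
    show "H j = {a + w |a w. a \<in> H j \<inter> U \<and> w \<in> orthogonal_comp U}
              \<and> Hp j = {a + w |a w. a \<in> Hp j \<inter> U \<and> w \<in> orthogonal_comp U}"
      unfolding Hj[OF j] Hp_def by (intro conjI gen)
  qed
  have bnd: "\<And>x. x \<in> (\<Inter>j<m. Hp j) \<Longrightarrow> L k \<le> nK k \<bullet> x \<and> nK k \<bullet> x \<le> c k"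
    using lb k by (auto simp: Hp_def c_def)
  have nb1: "nearly_bounded_in U (\<Inter>j<m. Hp j \<inter> U)"
    unfolding nearly_bounded_in_def
  proof (rule conjI)
    show "(\<Inter>j<m. Hp j \<inter> U) \<subseteq> U" using m0 by blast
    have "nK k \<noteq> 0 \<and> (\<exists>c1 c2. \<forall>x\<in>\<Inter>j<m. Hp j \<inter> U. c1 \<le> nK k \<bullet> x \<and> nK k \<bullet> x \<le> c2)"
      using nKnz[OF k(1)] bnd by blast
    then show "\<exists>v\<in>U. v \<noteq> 0 \<and> (\<exists>c1 c2. \<forall>x\<in>\<Inter>j<m. Hp j \<inter> U. c1 \<le> v \<bullet> x \<and> v \<bullet> x \<le> c2)"
      using nKU k by blast
  qed
  have nb2: "nearly_bounded_in UNIV (\<Inter>j<m. Hp j)"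
    unfolding nearly_bounded_in_def
    using nKnz[OF k(1)] bnd by blast
  have part3: "U = convex_cone hull (nK ` {..<m})
              \<and> bounded (\<Inter>j<m. Hp j \<inter> U)" if sm: "smooth_body T"
  proof -
    have allpos: "mu k > 0" if kk: "k < m" for k
    proof (rule ccontr)
      assume "\<not> mu k > 0"
      then have muk: "mu k = 0" using mu0[OF kk] by simp
      define j where "j = (k+m-1) mod m"
      have j: "j < m" "Suc j mod m = k" using kk m0 unfolding j_def
        by (auto simp: mod_Suc_eq)
      have pk: "p k = p j" using pst[OF j(1)] j(2) muk by simp
      define a where "a = q k - q j"
      define b where "b = q (Suc k mod m) - q k"
      have aN: "a \<in> normal_cone T (p j)" using qN[OF j(1)] j(2) a_def by simp
      have bN: "b \<in> normal_cone T (p j)" using qN[OF kk] pk b_def by simp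
      have anz: "a \<noteq> 0" using qne[OF j(1)] j(2) a_def by simp
      have bnz: "b \<noteq> 0" using qne[OF kk] b_def by simp
      obtain cc where cc: "cc > 0" "b = cc *\<^sub>R a"
        using normal_parallel[OF sm assms(2) pfr[OF j(1)] aN anz bN bnz] by blast
      define u where "u = 1 / (1 + cc)"
      have u: "0 \<le> u" "u \<le> 1" using cc by (auto simp: u_def)
      have "(1 - u) *\<^sub>R q j + u *\<^sub>R q (Suc k mod m) = q j + u *\<^sub>R (q (Suc k mod m) - q j)"
        by (simp add: algebra_simps)
      also have "q (Suc k mod m) - q j = b + a" by (simp add: a_def b_def)
      also have "b + a = (1 + cc) *\<^sub>R a" using cc(2) by (simp add: algebra_simps)
      also have "u *\<^sub>R ((1 + cc) *\<^sub>R a) = a" using cc by (simp add: u_def)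
      finally have "q k = (1 - u) *\<^sub>R q j + u *\<^sub>R q (Suc k mod m)" by (simp add: a_def)
      then have "q k \<in> closed_segment (q j) (q (Suc k mod m))"
        using u unfolding closed_segment_def by blast
      then show False using qseg[OF kk] j_def by simp
    qed
    define C where "C = convex_cone hull (nK ` {..<m})"
    have ccC: "convex_cone C" by (simp add: C_def convex_cone_convex_cone_hull)
    have genC: "\<And>j. j<m \<Longrightarrow> nK j \<in> C" by (simp add: C_def hull_inc)
    have negC: "- nK j \<in> C" if jm: "j<m" for j
    proof -
      have s: "(\<Sum>i\<in>{..<m}-{j}. mu i *\<^sub>R nK i) \<in> C"
        by (rule convex_cone_sum_mem[OF ccC]) (auto intro: convex_cone_scaleR[OF ccC] genC mu0)
      have "mu j *\<^sub>R nK j + (\<Sum>i\<in>{..<m}-{j}. mu i *\<^sub>R nK i) = 0"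
        using sumz jm by (simp add: sum.remove)
      then have "(\<Sum>i\<in>{..<m}-{j}. mu i *\<^sub>R nK i) = mu j *\<^sub>R (- nK j)" by (simp add: eq_neg_iff_add_eq_0 add.commute)
      then have "(1 / mu j) *\<^sub>R (\<Sum>i\<in>{..<m}-{j}. mu i *\<^sub>R nK i) = - nK j" using allpos[OF jm] by simp
      then show ?thesis using convex_cone_scaleR[OF ccC _ s, of "1 / mu j"] allpos[OF jm] by simp
    qed
    have "x \<in> C \<and> -x \<in> C" if "x \<in> U" for x
      using that[unfolded U_def]
    proof (induction rule: span_induct_alt)
      case base then show ?case using ccC by (simp add: convex_cone_contains_0)
    next
      case (step cc x y)
      then obtain j where j: "j<m" "x = nK j" by blast
      have "cc *\<^sub>R x \<in> C \<and> - (cc *\<^sub>R x) \<in> C"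
      proof (cases "cc \<ge> 0")
        case True then show ?thesis using convex_cone_scaleR[OF ccC] genC negC j
          by (metis scaleR_minus_right)
      next
        case False
        have "(-cc) *\<^sub>R (- nK j) \<in> C"
          by (rule convex_cone_scaleR[OF ccC]) (use False negC j in auto)
        moreover have "(-cc) *\<^sub>R nK j \<in> C"
          by (rule convex_cone_scaleR[OF ccC]) (use False genC j in auto)
        ultimately show ?thesis using j by simp
      qed
      then show ?case using step convex_cone_add[OF ccC, of "cc *\<^sub>R x" y] convex_cone_add[OF ccC, of "- (cc *\<^sub>R x)" "- y"]
        by (simp add: algebra_simps)
    qed
    then have "U \<subseteq> C" by blast
    moreover have "C \<subseteq> U" unfolding C_def U_def
      by (rule hull_minimal) (auto simp: span_superset subspace_imp_convex_cone)
    ultimately have eqU: "U = C" by blast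
    define M where "M = (\<Sum>k<m. \<bar>L k\<bar> + \<bar>c k\<bar>)"
    have "bounded (\<Inter>j<m. Hp j \<inter> U)"
    proof (rule bounded_span_inner[of "{..<m}" _ nK M])
      show "(\<Inter>j<m. Hp j \<inter> U) \<subseteq> span (nK ` {..<m})" using m0 U_def by blast
      fix x j assume x: "x \<in> (\<Inter>j<m. Hp j \<inter> U)" and j: "j \<in> {..<m}"
      have "x \<in> (\<Inter>j<m. Hp j)" using x by blast
      then have "L j \<le> nK j \<bullet> x" using lb[of j x] allpos[of j] j by auto
      moreover have "nK j \<bullet> x \<le> c j" using \<open>x \<in> (\<Inter>j<m. Hp j)\<close> j by (auto simp: Hp_def c_def)
      ultimately have "\<bar>nK j \<bullet> x\<bar> \<le> \<bar>L j\<bar> + \<bar>c j\<bar>" by linarith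
      also have "\<dots> \<le> M" unfolding M_def
        using member_le_sum[of j "{..<m}" "\<lambda>k. \<bar>L k\<bar> + \<bar>c k\<bar>"] j by auto
      finally show "\<bar>nK j \<bullet> x\<bar> \<le> M" .
    qed simp
    then show ?thesis using eqU C_def by simp
  qed
  show ?thesis using part1 nb1 nb2 part3 by blast
qed

end
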